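(* Let $d$ be a positive integer and let $\omega_N\subset\mathbb{S}^{d-1}$ be a set of $N$ distinct points on the unit sphere of $\mathbb{R}^d$. Assume that for any three distinct points $x,y,z\in\omega_N$, $$\langle x,y\rangle\langle x,z\rangle\langle y,z\rangle\le 0.$$ Then $N\le 2d$. Moreover, $N=2d$ holds only if $\omega_N$ is nearly orthogonal.
   Context: $\langle\cdot,\cdot\rangle$ is the standard Euclidean inner product and $\mathbb{S}^{d-1}=\{x\in\mathbb{R}^d:\|x\|=1\}$. A set of nonzero vectors in $\mathbb{R}^d$ is called nearly orthogonal if, among any three distinct vectors of the set, at least two are orthogonal. *)

theory Defs
  imports "HOL-Analysis.Analysis"
begin

definition nearly_orthogonal :: "'a::real_inner set \<Rightarrow> bool" where
  "nearly_orthogonal S \<longleftrightarrow> (\<forall>v\<in>S. v \<noteq> 0) \<and>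
     (\<forall>x\<in>S. \<forall>y\<in>S. \<forall>z\<in>S. x \<noteq> y \<and> x \<noteq> z \<and> y \<noteq> z \<longrightarrow>
        x \<bullet> y = 0 \<or> x \<bullet> z = 0 \<or> y \<bullet> z = 0)"

end

theory Submission
  imports Defs
begin

lemma sum_nonpos_eq_0_iff:
  fixes f :: "'b \<Rightarrow> real"
  assumes "finite A" "\<forall>x\<in>A. f x \<le> 0"
  shows "(sum f A = 0) = (\<forall>x\<in>A. f x = 0)"
proof -
  have "(sum (\<lambda>x. - f x) A = 0) = (\<forall>x\<in>A. - f x = 0)"
    using assms by (intro sum_nonneg_eq_0_iff) auto
  then show ?thesis by (simp add: sum_negf)
qed

lemma key_bound:
  fixes \<omega> :: "'a::real_inner set"
  assumes fin: "finite \<omega>" and x: "x \<in> \<omega>" and unit: "\<And>y. y \<in> \<omega> \<Longrightarrow> y \<bullet> y = 1"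
  shows "(\<Sum>y\<in>\<omega>-{x}. (x \<bullet> y)^2) \<le> 1 + (\<Sum>y\<in>\<omega>-{x}. \<Sum>z\<in>\<omega>-{x}-{y}. (x \<bullet> y) * (x \<bullet> z) * (y \<bullet> z))"
proof -
  define A where "A = \<omega> - {x}"
  have finA: "finite A" using fin by (simp add: A_def)
  define s where "s = (\<Sum>y\<in>A. (x \<bullet> y) *\<^sub>R y)"
  have xs: "x \<bullet> s = (\<Sum>y\<in>A. (x \<bullet> y)^2)"
    by (simp add: s_def inner_sum_right power2_eq_square)
  have ss: "s \<bullet> s = (\<Sum>y\<in>A. \<Sum>z\<in>A. (x \<bullet> y) * (x \<bullet> z) * (y \<bullet> z))"
    by (simp add: s_def inner_sum_right inner_sum_left sum_distrib_left mult.assoc mult.left_commute inner_commute[of _ y for y])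
  have inner: "(\<Sum>z\<in>A. (x \<bullet> y) * (x \<bullet> z) * (y \<bullet> z)) = (x \<bullet> y)^2 + (\<Sum>z\<in>A-{y}. (x \<bullet> y) * (x \<bullet> z) * (y \<bullet> z))"
    if "y \<in> A" for y
  proof -
    have "y \<bullet> y = 1" using unit that by (auto simp: A_def)
    then show ?thesis using sum.remove[OF finA that, of "\<lambda>z. (x \<bullet> y) * (x \<bullet> z) * (y \<bullet> z)"]
      by (simp add: power2_eq_square)
  qed
  have ss2: "s \<bullet> s = (\<Sum>y\<in>A. (x \<bullet> y)^2) + (\<Sum>y\<in>A. \<Sum>z\<in>A-{y}. (x \<bullet> y) * (x \<bullet> z) * (y \<bullet> z))"
    unfolding ss by (simp add: inner sum.distrib)
  have "0 \<le> (x - s) \<bullet> (x - s)" by simp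
  also have "\<dots> = x \<bullet> x - 2 * (x \<bullet> s) + s \<bullet> s"
    by (simp add: inner_diff_left inner_diff_right inner_commute)
  finally show ?thesis using unit[OF x] xs ss2 unfolding A_def by (simp add: Diff_insert2[symmetric] insert_commute)
qed


theorem theorem3p1:
  fixes \<omega> :: "(real ^ 'd) set"
  assumes "finite \<omega>"
    and "\<omega> \<subseteq> sphere 0 1"
    and "\<And>x y z. x \<in> \<omega> \<Longrightarrow> y \<in> \<omega> \<Longrightarrow> z \<in> \<omega> \<Longrightarrow> x \<noteq> y \<Longrightarrow> x \<noteq> z \<Longrightarrow> y \<noteq> z \<Longrightarrow>
           (x \<bullet> y) * (x \<bullet> z) * (y \<bullet> z) \<le> 0"
  shows "card \<omega> \<le> 2 * CARD('d) \<and>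
         (card \<omega> = 2 * CARD('d) \<longrightarrow> nearly_orthogonal \<omega>)"
proof -
  note fin = assms(1)
  have unit: "y \<bullet> y = 1" if "y \<in> \<omega>" for y
  proof -
    have "norm y = 1" using assms(2) that by auto
    then show ?thesis by (simp add: power2_norm_eq_inner[symmetric])
  qed
  define N where "N = card \<omega>"
  define n where "n = CARD('d)"
  define T where "T x = (\<Sum>y\<in>\<omega>-{x}. \<Sum>z\<in>\<omega>-{x}-{y}. (x \<bullet> y) * (x \<bullet> z) * (y \<bullet> z))" for x
  have Tle: "T x \<le> 0" if "x \<in> \<omega>" for x
    unfolding T_def using assms(3) that by (intro sum_nonpos) auto
  define M where "M a b = (\<Sum>x\<in>\<omega>. x$a * x$b)" for a b
  have f1: "(\<Sum>a\<in>UNIV. M a a) = real N"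
  proof -
    have "(\<Sum>a\<in>UNIV. M a a) = (\<Sum>x\<in>\<omega>. x \<bullet> x)"
      unfolding M_def inner_vec_def by (subst sum.swap) simp
    also have "\<dots> = (\<Sum>x\<in>\<omega>. 1)" using unit by simp
    finally show ?thesis by (simp add: N_def)
  qed
  have f2: "(\<Sum>a\<in>UNIV. \<Sum>b\<in>UNIV. (M a b)^2) = (\<Sum>x\<in>\<omega>. \<Sum>y\<in>\<omega>. (x \<bullet> y)^2)"
  proof -
    have "(\<Sum>x\<in>\<omega>. \<Sum>y\<in>\<omega>. (x \<bullet> y)^2) = (\<Sum>x\<in>\<omega>. \<Sum>y\<in>\<omega>. \<Sum>a\<in>UNIV. \<Sum>b\<in>UNIV. x$a * x$b * (y$a * y$b))"
      unfolding inner_vec_def power2_eq_square sum_product by (simp add: ac_simps)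
    also have "\<dots> = (\<Sum>x\<in>\<omega>. \<Sum>a\<in>UNIV. \<Sum>b\<in>UNIV. \<Sum>y\<in>\<omega>. x$a * x$b * (y$a * y$b))"
      by (rule sum.cong[OF refl], subst sum.swap, rule sum.cong[OF refl], subst sum.swap, rule refl)
    also have "\<dots> = (\<Sum>a\<in>UNIV. \<Sum>b\<in>UNIV. \<Sum>x\<in>\<omega>. \<Sum>y\<in>\<omega>. x$a * x$b * (y$a * y$b))"
      by (subst sum.swap, rule sum.cong[OF refl], subst sum.swap, rule refl)
    also have "\<dots> = (\<Sum>a\<in>UNIV. \<Sum>b\<in>UNIV. (M a b)^2)"
      unfolding M_def power2_eq_square sum_product by simp
    finally show ?thesis by simp
  qed
  have f3: "(real N)^2 \<le> real n * (\<Sum>a\<in>UNIV. \<Sum>b\<in>UNIV. (M a b)^2)"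
  proof -
    have "(real N)^2 \<le> (\<Sum>a\<in>UNIV. (M a a)^2) * real n"
      using sum_squared_le_sum_of_squares[of "\<lambda>a. M a a" UNIV] f1 by (simp add: n_def)
    moreover have "(\<Sum>a\<in>UNIV. (M a a)^2) \<le> (\<Sum>a\<in>UNIV. \<Sum>b\<in>UNIV. (M a b)^2)"
      by (intro sum_mono member_le_sum[where f="\<lambda>b. (M _ b)^2"]) auto
    ultimately have "(real N)^2 \<le> (\<Sum>a\<in>UNIV. \<Sum>b\<in>UNIV. (M a b)^2) * real n"
      by (meson order_trans mult_right_mono of_nat_0_le_iff)
    then show ?thesis by (simp add: mult.commute)
  qed
  have f4: "(\<Sum>x\<in>\<omega>. \<Sum>y\<in>\<omega>. (x \<bullet> y)^2) \<le> 2 * real N + (\<Sum>x\<in>\<omega>. T x)"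
  proof -
    have "(\<Sum>y\<in>\<omega>. (x \<bullet> y)^2) \<le> 2 + T x" if "x \<in> \<omega>" for x
    proof -
      have "(\<Sum>y\<in>\<omega>. (x \<bullet> y)^2) = (x \<bullet> x)^2 + (\<Sum>y\<in>\<omega>-{x}. (x \<bullet> y)^2)"
        using sum.remove[OF fin that] by simp
      then show ?thesis using key_bound[OF fin that unit] unit[OF that] unfolding T_def by simp
    qed
    then have "(\<Sum>x\<in>\<omega>. \<Sum>y\<in>\<omega>. (x \<bullet> y)^2) \<le> (\<Sum>x\<in>\<omega>. 2 + T x)" by (rule sum_mono)
    then show ?thesis by (simp add: sum.distrib N_def)
  qed
  have sT: "(\<Sum>x\<in>\<omega>. T x) \<le> 0" using Tle by (simp add: sum_nonpos)
  have main: "(real N)^2 \<le> real n * (2 * real N + (\<Sum>x\<in>\<omega>. T x))"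
  proof -
    have "real n * (\<Sum>a\<in>UNIV. \<Sum>b\<in>UNIV. (M a b)^2) \<le> real n * (2 * real N + (\<Sum>x\<in>\<omega>. T x))"
      using f2 f4 by (intro mult_left_mono) auto
    then show ?thesis using f3 by linarith
  qed
  have npos: "real n > 0" by (simp add: n_def)
  have le: "N \<le> 2 * n"
  proof (rule ccontr)
    assume "\<not> ?thesis"
    then have "real N > 2 * real n" by linarith
    moreover have "real n * (2 * real N + (\<Sum>x\<in>\<omega>. T x)) \<le> real n * (2 * real N)"
      using sT npos by simp
    ultimately have "(real N)^2 \<le> 2 * real n * real N" using main by simp
    moreover have "2 * real n * real N < real N * real N" using \<open>real N > 2 * real n\<close> npos
      by (intro mult_strict_right_mono) auto
    ultimately show False by (simp add: power2_eq_square)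
  qed
  have eq: "nearly_orthogonal \<omega>" if "N = 2 * n"
  proof -
    have "(real N)^2 = real n * (2 * real N)" using that by (simp add: power2_eq_square)
    with main npos have "0 \<le> (\<Sum>x\<in>\<omega>. T x)"
      by (simp add: distrib_left zero_le_mult_iff)
    with sT have "(\<Sum>x\<in>\<omega>. T x) = 0" by simp
    then have T0: "T x = 0" if "x \<in> \<omega>" for x
      using sum_nonpos_eq_0_iff[OF fin] Tle that by blast
    show ?thesis unfolding nearly_orthogonal_def
    proof (intro conjI ballI impI)
      fix v assume "v \<in> \<omega>" then show "v \<noteq> 0" using unit by force
    next
      fix x y z assume xyz: "x \<in> \<omega>" "y \<in> \<omega>" "z \<in> \<omega>" "x \<noteq> y \<and> x \<noteq> z \<and> y \<noteq> z"
      have fin2: "finite (\<omega>-{x}-{y})" "finite (\<omega> - {x})" using fin by auto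
      have inner0: "(\<Sum>z\<in>\<omega>-{x}-{y}. (x \<bullet> y) * (x \<bullet> z) * (y \<bullet> z)) = 0" if "y \<in> \<omega>-{x}" for y
      proof -
        have nonp: "\<forall>y\<in>\<omega>-{x}. (\<Sum>z\<in>\<omega>-{x}-{y}. (x \<bullet> y) * (x \<bullet> z) * (y \<bullet> z)) \<le> 0"
          using assms(3) xyz(1) by (auto intro!: sum_nonpos)
        show ?thesis using T0[OF xyz(1)] sum_nonpos_eq_0_iff[OF fin2(2) nonp] that unfolding T_def by blast
      qed
      have "(x \<bullet> y) * (x \<bullet> z) * (y \<bullet> z) = 0"
      proof -
        have nonp: "\<forall>z\<in>\<omega>-{x}-{y}. (x \<bullet> y) * (x \<bullet> z) * (y \<bullet> z) \<le> 0"
          using assms(3) xyz by auto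
        show ?thesis using inner0[of y] xyz sum_nonpos_eq_0_iff[OF fin2(1) nonp] by blast
      qed
      then show "x \<bullet> y = 0 \<or> x \<bullet> z = 0 \<or> y \<bullet> z = 0" by simp
    qed
  qed
  show ?thesis using le eq by (simp add: N_def n_def)
qed

end
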